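(* Let $\mathcal{X}$ be a finite set of actions, $\mathcal{Y}$ a finite set of responses, $\mathcal{H}\subseteq\mathcal{Y}^{\mathcal{X}}$, $\mathrm{cost}:\mathcal{X}\times\mathcal{Y}\to\mathbb{R}_+$. Let $f:2^{\mathcal{X}\times\mathcal{Y}}\to\mathbb{R}_+$, $Q>0$, $\eta>0$ be such that $f$ is monotone non-decreasing and submodular, $f(\emptyset)=0$, for every $S$, $f(S)\ge Q-\eta$ implies $f(S)\ge Q$, and $f$ is consistency-aware for $Q$. Let $\alpha\ge1$ and let $\mathcal{A}$ be an $\alpha$-approximate greedy algorithm for the utility function $u^f$. Then $$\mathrm{cost}(\mathcal{A})\le 2\min(g_{\mathrm{cost}},R_{\mathrm{cost}})\cdot\alpha\cdot(\log(Q/\eta)+1)\cdot\mathrm{OPT}.$$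
   Context: The true state is an unknown $h^*\in\mathcal{H}$. An interactive algorithm $\mathcal{A}$, given the set $S$ of pairs observed so far, outputs either an action $\mathcal{A}(S)\in\mathcal{X}$ (yielding $(x,h^*(x))$, added to $S$) or terminates. $S^h[\mathcal{A}]$ is the set collected until termination when $h^*=h$; $\mathrm{cost}(S)=\sum_{(x,y)\in S}\mathrm{cost}(x,y)$; $\mathrm{cost}(\mathcal{A})=\max_{h\in\mathcal{H}}\mathrm{cost}(S^h[\mathcal{A}])$; $\mathrm{OPT}$ is the minimum of $\mathrm{cost}(\mathcal{A})$ over interactive algorithms with $f(S^h[\mathcal{A}])\ge Q$ for all $h\in\mathcal{H}$ ($\infty$ if none). Version space $V(S)=\{h\in\mathcal{H}\mid\forall(x,y)\in S,\ y=h(x)\}$. $f$ is consistency-aware for $Q$ if $f(S)\ge Q$ whenever $V(S)=\emptyset$. $\delta_g(z\mid A)=g(A\cup\{z\})-g(A)$; $u^f(x,S)=\min_{h\in V(S)}\frac{\delta_{\min(f,Q)}((x,h(x))\mid S)}{\mathrm{cost}(x,h(x))}$. $\mathcal{A}$ is an $\alpha$-approximate greedy algorithm for $u$ if for all $S$: if $f(S)\ge Q$ then $\mathcal{A}$ terminates on $S$, otherwise $\mathcal{A}(S)\in\mathcal{X}$ and $u(\mathcal{A}(S),S)\ge\frac1\alpha\max_{x}u(x,S)$. Cost ratio $R_{\mathrm{cost}}=\max_x\frac{\max_y\mathrm{cost}(x,y)}{\min_y\mathrm{cost}(x,y)}$. With $\phi(x)$ the second-smallest value of the multiset $\{\mathrm{cost}(x,y)\mid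 y\in\mathcal{Y}\}$, $\phi_{\min}=\min_x\phi(x)$, $c_{\max}=\max_{(x,y)}\mathrm{cost}(x,y)$, the global second-smallest cost ratio is $g_{\mathrm{cost}}=c_{\max}/\phi_{\min}$. *)

theory Defs
  imports Complex_Main "HOL-Library.Multiset" "HOL-Library.Extended_Real"
begin

(* An interactive algorithm: given the observed set S, either returns Some x
   (the next action) or None (terminate). *)
type_synonym ('x,'y) ialg = "('x \<times> 'y) set \<Rightarrow> 'x option"

primrec run :: "('x,'y) ialg \<Rightarrow> ('x \<Rightarrow> 'y) \<Rightarrow> nat \<Rightarrow> ('x \<times> 'y) set" where
  "run A h 0 = {}"
| "run A h (Suc n) = (case A (run A h n) of None \<Rightarrow> run A h n
                        | Some x \<Rightarrow> insert (x, h x) (run A h n))"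

definition terminates :: "('x,'y) ialg \<Rightarrow> ('x \<Rightarrow> 'y) \<Rightarrow> bool" where
  "terminates A h \<longleftrightarrow> (\<exists>n. A (run A h n) = None)"

definition final_set :: "('x,'y) ialg \<Rightarrow> ('x \<Rightarrow> 'y) \<Rightarrow> ('x \<times> 'y) set" where
  "final_set A h = run A h (LEAST n. A (run A h n) = None)"

definition set_cost :: "('x \<Rightarrow> 'y \<Rightarrow> real) \<Rightarrow> ('x \<times> 'y) set \<Rightarrow> real" where
  "set_cost cost S = (\<Sum>(x,y)\<in>S. cost x y)"

definition alg_cost :: "('x \<Rightarrow> 'y) set \<Rightarrow> ('x \<Rightarrow> 'y \<Rightarrow> real) \<Rightarrow> ('x,'y) ialg \<Rightarrow> ereal" where
  "alg_cost H cost A = (SUP h\<in>H. (if terminates A h then ereal (set_cost cost (final_set A h)) else \<infinity>))"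

(* OPT: infimum of cost(A) over algorithms achieving f >= Q for every h (= \<infinity> if none) *)
definition OPT :: "('x \<Rightarrow> 'y) set \<Rightarrow> ('x \<Rightarrow> 'y \<Rightarrow> real) \<Rightarrow> (('x \<times> 'y) set \<Rightarrow> real) \<Rightarrow> real \<Rightarrow> ereal" where
  "OPT H cost f Q = (INF A\<in>{A. \<forall>h\<in>H. terminates A h \<and> f (final_set A h) \<ge> Q}. alg_cost H cost A)"

definition version_space :: "('x \<Rightarrow> 'y) set \<Rightarrow> ('x \<times> 'y) set \<Rightarrow> ('x \<Rightarrow> 'y) set" where
  "version_space H S = {h\<in>H. \<forall>(x,y)\<in>S. y = h x}"

definition consistency_aware :: "('x \<Rightarrow> 'y) set \<Rightarrow> (('x \<times> 'y) set \<Rightarrow> real) \<Rightarrow> real \<Rightarrow> bool" where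
  "consistency_aware H f Q \<longleftrightarrow> (\<forall>S. version_space H S = {} \<longrightarrow> f S \<ge> Q)"

definition delta :: "('a set \<Rightarrow> real) \<Rightarrow> 'a \<Rightarrow> 'a set \<Rightarrow> real" where
  "delta g z A = g (A \<union> {z}) - g A"

definition monotone_setfun :: "('a set \<Rightarrow> real) \<Rightarrow> bool" where
  "monotone_setfun f \<longleftrightarrow> (\<forall>A B. A \<subseteq> B \<longrightarrow> f A \<le> f B)"

definition submodular :: "('a set \<Rightarrow> real) \<Rightarrow> bool" where
  "submodular f \<longleftrightarrow> (\<forall>A B z. A \<subseteq> B \<longrightarrow> z \<notin> B \<longrightarrow> delta f z A \<ge> delta f z B)"

definition utility :: "('x::finite \<Rightarrow> 'y::finite) set \<Rightarrow> ('x \<Rightarrow> 'y \<Rightarrow> real) \<Rightarrow> (('x \<times> 'y) set \<Rightarrow> real)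
                       \<Rightarrow> real \<Rightarrow> 'x \<Rightarrow> ('x \<times> 'y) set \<Rightarrow> real" where
  "utility H cost f Q x S =
     Min ((\<lambda>h. delta (\<lambda>T. min (f T) Q) (x, h x) S / cost x (h x)) ` version_space H S)"

definition approx_greedy :: "real \<Rightarrow> (('x::finite) \<Rightarrow> ('x \<times> 'y) set \<Rightarrow> real)
                       \<Rightarrow> (('x \<times> 'y) set \<Rightarrow> real) \<Rightarrow> real \<Rightarrow> ('x,'y) ialg \<Rightarrow> bool" where
  "approx_greedy \<alpha> u f Q A \<longleftrightarrow>
     (\<forall>S. (f S \<ge> Q \<longrightarrow> A S = None) \<and>
          (\<not> f S \<ge> Q \<longrightarrow> (\<exists>x. A S = Some x \<and> u x S \<ge> (1/\<alpha>) * Max (range (\<lambda>x'. u x' S)))))"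

definition R_cost :: "('x::finite \<Rightarrow> 'y::finite \<Rightarrow> real) \<Rightarrow> real" where
  "R_cost cost = Max (range (\<lambda>x. Max (range (cost x)) / Min (range (cost x))))"

definition second_smallest_cost :: "('x \<Rightarrow> 'y::finite \<Rightarrow> real) \<Rightarrow> 'x \<Rightarrow> real" where
  "second_smallest_cost cost x = sorted_list_of_multiset (image_mset (cost x) (mset_set UNIV)) ! 1"

definition g_cost :: "('x::finite \<Rightarrow> 'y::finite \<Rightarrow> real) \<Rightarrow> real" where
  "g_cost cost = Max (range (\<lambda>(x,y). cost x y)) / Min (range (second_smallest_cost cost))"

end

theory Submission
  imports Defs
begin



lemma phi_le:
  fixes cost :: "'x \<Rightarrow> 'y::finite \<Rightarrow> real"
  assumes "y1 \<noteq> y2"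
  shows "second_smallest_cost cost x \<le> max (cost x y1) (cost x y2)"
proof (rule ccontr)
  define m where "m = max (cost x y1) (cost x y2)"
  define M where "M = image_mset (cost x) (mset_set (UNIV::'y set))"
  define L where "L = sorted_list_of_multiset M"
  assume "\<not> ?thesis"
  hence gt: "L ! 1 > m" unfolding second_smallest_cost_def L_def M_def m_def by (simp add: not_le)
  have "size (filter_mset (\<lambda>v. v \<le> m) M) = card {y. cost x y \<le> m}"
    unfolding M_def by (simp add: filter_mset_image_mset filter_mset_mset_set)
  moreover have "card {y. cost x y \<le> m} \<ge> card {y1, y2}"
    by (rule card_mono) (auto simp: m_def)
  ultimately have c2: "size (filter_mset (\<lambda>v. v \<le> m) M) \<ge> 2" using assms by simp
  have "size (filter_mset (\<lambda>v. v \<le> m) M) = length (filter (\<lambda>v. v \<le> m) L)"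
    unfolding L_def by (metis mset_filter mset_sorted_list_of_multiset size_mset)
  also have "length L \<ge> 2" using c2
    by (metis L_def mset_sorted_list_of_multiset multiset_filter_subset order_trans size_mset size_mset_mono)
  then obtain a b L' where LL: "L = a # b # L'" by (cases L; cases "tl L"; auto)
  have srt: "sorted L" unfolding L_def by simp
  have "\<forall>v\<in>set (b # L'). v > m" using gt srt LL by auto
  hence "filter (\<lambda>v. v \<le> m) (b # L') = []" by (simp add: filter_empty_conv) (meson not_le)
  hence "length (filter (\<lambda>v. v \<le> m) L) \<le> 1" using LL by simp
  finally show False using c2 by simp
qed

lemma phi_in:
  fixes cost :: "'x \<Rightarrow> 'y::finite \<Rightarrow> real"
  assumes "card (UNIV::'y set) \<ge> 2"
  shows "\<exists>y. second_smallest_cost cost x = cost x y"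
proof -
  define L where "L = sorted_list_of_multiset (image_mset (cost x) (mset_set (UNIV::'y set)))"
  have "length L = card (UNIV::'y set)" unfolding L_def
    by (metis mset_sorted_list_of_multiset size_image_mset size_mset size_mset_set)
  hence "L ! 1 \<in> set L" using assms by simp
  thus ?thesis unfolding second_smallest_cost_def L_def[symmetric] by (auto simp: L_def)
qed




lemma R_ge:
  fixes cost :: "'x::finite \<Rightarrow> 'y::finite \<Rightarrow> real"
  assumes pos: "\<And>x y. cost x y > 0"
  shows "cost x y1 \<le> R_cost cost * cost x y2"
proof -
  have "cost x y1 \<le> Max (range (cost x))" by simp
  moreover have "Min (range (cost x)) \<le> cost x y2" by simp
  moreover have mpos: "Min (range (cost x)) > 0" using pos by (simp add: Min_gr_iff)
  ultimately have "cost x y1 / cost x y2 \<le> Max (range (cost x)) / Min (range (cost x))"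
    using pos by (meson frac_le less_le_trans less_imp_le)
  also have "\<dots> \<le> R_cost cost" unfolding R_cost_def by simp
  finally show ?thesis using pos[of x y2] by (simp add: divide_le_eq)
qed

lemma R_ge1:
  fixes cost :: "'x::finite \<Rightarrow> 'y::finite \<Rightarrow> real"
  assumes pos: "\<And>x y. cost x y > 0"
  shows "R_cost cost \<ge> 1"
  using R_ge[of cost, OF pos, of undefined undefined undefined] pos[of undefined undefined] by simp

definition cmax :: "('x::finite \<Rightarrow> 'y::finite \<Rightarrow> real) \<Rightarrow> real" where
  "cmax cost = Max (range (\<lambda>(x,y). cost x y))"
definition phimin :: "('x::finite \<Rightarrow> 'y::finite \<Rightarrow> real) \<Rightarrow> real" where
  "phimin cost = Min (range (second_smallest_cost cost))"

lemma cmax_ge: "cost x y \<le> cmax cost"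
  unfolding cmax_def by (rule Max_ge) (auto intro: image_eqI[of _ _ "(x,y)"])

lemma phimin_le: "phimin cost \<le> second_smallest_cost cost x"
  unfolding phimin_def by simp

lemma phimin_pos:
  fixes cost :: "'x::finite \<Rightarrow> 'y::finite \<Rightarrow> real"
  assumes pos: "\<And>x y. cost x y > 0" and card: "card (UNIV::'y set) \<ge> 2"
  shows "phimin cost > 0 \<and> phimin cost \<le> cmax cost"
proof -
  have "phimin cost \<in> range (second_smallest_cost cost)" unfolding phimin_def
    by (rule Min_in) auto
  then obtain x where "phimin cost = second_smallest_cost cost x" by auto
  with phi_in[OF card, of cost x] obtain y where "phimin cost = cost x y" by auto
  thus ?thesis using pos[of x y] cmax_ge[of cost x y] by simp
qed

lemma g_eq:
  fixes cost :: "'x::finite \<Rightarrow> 'y::finite \<Rightarrow> real"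
  assumes pos: "\<And>x y. cost x y > 0" and card: "card (UNIV::'y set) \<ge> 2"
  shows "g_cost cost \<ge> 1 \<and> cmax cost = g_cost cost * phimin cost"
  using phimin_pos[of cost, OF pos card] unfolding g_cost_def cmax_def[symmetric] phimin_def[symmetric]
  by auto

lemma run_mono: "m \<le> n \<Longrightarrow> run A h m \<subseteq> run A h n"
proof (induction n)
  case 0 then show ?case by simp
next
  case (Suc n)
  have "run A h n \<subseteq> run A h (Suc n)" by (auto split: option.splits)
  with Suc show ?case by (cases "m = Suc n") auto
qed

lemma run_graph: "(x,y) \<in> run A h n \<Longrightarrow> y = h x"
  by (induction n) (auto split: option.splits)

lemma run_stable: "A (run A h n) = None \<Longrightarrow> run A h (n + k) = run A h n"
  by (induction k) auto

lemma run_sub_final: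
  assumes "terminates A h"
  shows "run A h k \<subseteq> final_set A h"
proof -
  define N where "N = (LEAST n. A (run A h n) = None)"
  have NN: "A (run A h N) = None" using assms unfolding terminates_def N_def by (rule LeastI_ex)
  show ?thesis
  proof (cases "k \<le> N")
    case True then show ?thesis unfolding final_set_def N_def[symmetric] by (rule run_mono)
  next
    case False
    then have "run A h k = run A h (N + (k - N))" by simp
    also have "\<dots> = run A h N" by (rule run_stable[of A h N, OF NN])
    finally show ?thesis unfolding final_set_def N_def by simp
  qed
qed

lemma run_agree:
  assumes "\<forall>(x,y)\<in>run A h' n. y = h x"
  shows "k \<le> n \<Longrightarrow> run A h k = run A h' k"
proof (induction k)
  case 0 then show ?case by simp
next
  case (Suc k)
  hence IH: "run A h k = run A h' k" by simp
  show ?case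
  proof (cases "A (run A h' k)")
    case None then show ?thesis using IH by simp
  next
    case (Some x)
    have "(x, h' x) \<in> run A h' (Suc k)" using Some by simp
    hence "(x, h' x) \<in> run A h' n" using run_mono[OF Suc.prems] by blast
    hence "h x = h' x" using assms by auto
    then show ?thesis using IH Some by simp
  qed
qed

lemma set_cost_nonneg: "(\<And>x y. cost x y > 0) \<Longrightarrow> set_cost cost S \<ge> 0"
  unfolding set_cost_def by (rule sum_nonneg) (auto intro: less_imp_le)

lemma set_cost_mono:
  fixes S T :: "('x::finite \<times> 'y::finite) set"
  shows "(\<And>x y. cost x y > 0) \<Longrightarrow> S \<subseteq> T \<Longrightarrow> set_cost cost S \<le> set_cost cost T"
  unfolding set_cost_def by (rule sum_mono2) (auto intro: less_imp_le)

lemma set_cost_insert: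
  fixes S :: "('x::finite \<times> 'y::finite) set"
  shows "e \<notin> S \<Longrightarrow> set_cost cost (insert e S) = set_cost cost S + (case e of (x,y) \<Rightarrow> cost x y)"
  unfolding set_cost_def by simp

lemma minQ_ineq: "(a::real) \<le> b \<Longrightarrow> a \<le> a' \<Longrightarrow> b \<le> b' \<Longrightarrow> a' \<le> b' \<Longrightarrow> a' - a \<ge> b' - b \<Longrightarrow> min b' Q - min b Q \<le> min a' Q - min a Q"
  by (cases "a' \<le> Q"; cases "b \<le> Q"; cases "b' \<le> Q"; cases "a \<le> Q"; simp)

lemma fQ_mono: "monotone_setfun f \<Longrightarrow> monotone_setfun (\<lambda>T. min (f T) Q)"
  unfolding monotone_setfun_def by (meson min.mono order_refl)

lemma fQ_submod:
  assumes "monotone_setfun f" "submodular f"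
  shows "submodular (\<lambda>T. min (f T) Q)"
  unfolding submodular_def delta_def
proof (intro allI impI)
  fix A B :: "'a set" and z assume ab: "A \<subseteq> B" "z \<notin> B"
  have m: "\<And>X Y. X \<subseteq> Y \<Longrightarrow> f X \<le> f Y" using assms(1) unfolding monotone_setfun_def by auto
  have "f A \<le> f B" "f A \<le> f (A \<union> {z})" "f B \<le> f (B \<union> {z})" "f (A \<union> {z}) \<le> f (B \<union> {z})"
    using ab by (auto intro!: m)
  moreover have "f (A \<union> {z}) - f A \<ge> f (B \<union> {z}) - f B"
    using assms(2) ab unfolding submodular_def delta_def by auto
  ultimately show "min (f (B \<union> {z})) Q - min (f B) Q \<le> min (f (A \<union> {z})) Q - min (f A) Q"
    by (rule minQ_ineq)
qed

lemma subadd: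
  assumes mono: "monotone_setfun g" and sm: "submodular g" and fin: "finite T"
  shows "g (S \<union> T) - g S \<le> (\<Sum>e\<in>T. delta g e S)"
  using fin
proof (induction T rule: finite_induct)
  case empty then show ?case by simp
next
  case (insert e T)
  have d: "g (S \<union> insert e T) - g (S \<union> T) \<le> delta g e S"
  proof (cases "e \<in> S \<union> T")
    case True
    hence "S \<union> insert e T = S \<union> T" by auto
    moreover have "delta g e S \<ge> 0" using mono unfolding delta_def monotone_setfun_def by (simp add: subset_insertI)
    ultimately show ?thesis by simp
  next
    case False
    hence "delta g e (S \<union> T) \<le> delta g e S" using sm unfolding submodular_def by auto
    moreover have "S \<union> insert e T = (S \<union> T) \<union> {e}" by auto
    ultimately show ?thesis unfolding delta_def by simp
  qed
  show ?case using insert d by simp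
qed

lemma vs_anti: "S1 \<subseteq> S2 \<Longrightarrow> version_space H S2 \<subseteq> version_space H S1"
  unfolding version_space_def by auto




lemma runs_equal_cheap:
  fixes h1 h2 :: "'x \<Rightarrow> 'y" and cost :: "'x \<Rightarrow> 'y \<Rightarrow> real"
  assumes c1: "\<And>n x. B (run B h1 n) = Some x \<Longrightarrow> cost x (h1 x) < \<phi>"
    and c2: "\<And>n x. B (run B h2 n) = Some x \<Longrightarrow> cost x (h2 x) < \<phi>"
    and ph: "\<And>x y1 y2. y1 \<noteq> y2 \<Longrightarrow> \<phi> \<le> max (cost x y1) (cost x y2)"
  shows "run B h1 n = run B h2 n"
proof (induction n)
  case 0 then show ?case by simp
next
  case (Suc n)
  show ?case
  proof (cases "B (run B h1 n)")
    case None then show ?thesis using Suc by simp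
  next
    case (Some x)
    have s2: "B (run B h2 n) = Some x" using Some Suc by simp
    have "h1 x = h2 x"
    proof (rule ccontr)
      assume "h1 x \<noteq> h2 x"
      from ph[OF this, of x] c1[OF Some] c2[OF s2] show False by (simp add: max_def split: if_splits)
    qed
    then show ?thesis using Some s2 Suc by simp
  qed
qed

lemma key:
  fixes H :: "('x::finite \<Rightarrow> 'y::finite) set"
    and cost :: "'x \<Rightarrow> 'y \<Rightarrow> real"
    and f :: "('x \<times> 'y) set \<Rightarrow> real"
    and Q C :: real and B :: "('x,'y) ialg"
  assumes card_Y: "card (UNIV :: 'y set) \<ge> 2"
    and cost_pos: "\<And>x y. cost x y > 0"
    and f_mono: "monotone_setfun f"
    and f_submod: "submodular f"
    and f_ca: "consistency_aware H f Q"
    and Bt: "\<And>h. h \<in> H \<Longrightarrow> terminates B h"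
    and Bf: "\<And>h. h \<in> H \<Longrightarrow> f (final_set B h) \<ge> Q"
    and BC: "\<And>h. h \<in> H \<Longrightarrow> set_cost cost (final_set B h) \<le> C"
    and S: "f S < Q"
  shows "Q - f S \<le> Max (range (\<lambda>x. utility H cost f Q x S)) * (2 * min (g_cost cost) (R_cost cost) * C)"
proof -
  define fq where "fq = (\<lambda>T. min (f T) Q)"
  define \<kappa> where "\<kappa> = 2 * min (g_cost cost) (R_cost cost)"
  define V where "V = version_space H S"
  define u where "u x = utility H cost f Q x S" for x
  define M where "M = Max (range u)"
  have fq_mono: "monotone_setfun fq" unfolding fq_def by (rule fQ_mono[OF f_mono])
  have fq_sub: "submodular fq" unfolding fq_def by (rule fQ_submod[OF f_mono f_submod])
  have V0: "V \<noteq> {}" using f_ca S unfolding consistency_aware_def V_def by force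
  have finV: "finite V" by simp
  define w where "w h x = delta fq (x, h x) S / cost x (h x)" for h x
  have u_eq: "u x = Min ((\<lambda>h. w h x) ` V)" for x
    unfolding u_def utility_def w_def fq_def V_def by simp
  have w_nn: "w h x \<ge> 0" for h x
  proof -
    have "fq S \<le> fq (S \<union> {(x, h x)})" using fq_mono unfolding monotone_setfun_def by (meson Un_upper1)
    thus ?thesis unfolding w_def delta_def using cost_pos[of x "h x"] by simp
  qed
  have "\<forall>x. \<exists>h. h \<in> V \<and> w h x = u x"
  proof
    fix x
    have "Min ((\<lambda>h. w h x) ` V) \<in> (\<lambda>h. w h x) ` V" using V0 finV by (intro Min_in) auto
    thus "\<exists>h. h \<in> V \<and> w h x = u x" unfolding u_eq by auto
  qed
  then obtain hx where hx: "\<And>x. hx x \<in> V \<and> w (hx x) x = u x" by metis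
  have u_nn: "u x \<ge> 0" for x unfolding u_eq using V0 finV w_nn by (simp add: Min_ge_iff)
  have u_le: "u x \<le> M" for x unfolding M_def by simp
  have M_nn: "M \<ge> 0" using u_nn[of undefined] u_le[of undefined] by simp
  define h' where "h' x = hx x x" for x
  define T where "T n = run B h' n" for n
  define Vs where "Vs n = version_space H (S \<union> T n)" for n
  have VH: "V \<subseteq> H" unfolding V_def version_space_def by auto
  obtain h0 where h0: "h0 \<in> H" using V0 VH by auto
  have C0: "C \<ge> 0" using BC[OF h0] set_cost_nonneg[of cost, OF cost_pos] by (meson order_trans)
  have R1: "R_cost cost \<ge> 1" by (rule R_ge1[of cost, OF cost_pos])
  have g1: "g_cost cost \<ge> 1" and cm: "cmax cost = g_cost cost * phimin cost"
    using g_eq[of cost, OF cost_pos card_Y] by auto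
  have k1: "\<kappa> \<ge> 1" unfolding \<kappa>_def using R1 g1 by simp
  have anti: "m \<le> n \<Longrightarrow> Vs n \<subseteq> Vs m" for m n
    unfolding Vs_def T_def by (intro vs_anti) (use run_mono in blast)
  have T_cost_final: "\<And>h k. h \<in> H \<Longrightarrow> set_cost cost (run B h k) \<le> C"
    using BC Bt run_sub_final set_cost_mono[of cost, OF cost_pos] by (meson order_trans)
  have ex: "\<exists>N. f (S \<union> T N) \<ge> Q \<and> set_cost cost (T N) \<le> \<kappa> * C"
  proof (cases "\<forall>n. Vs n \<noteq> {}")
    case True
    obtain n0 where n0: "\<forall>n. card (Vs n0) \<le> card (Vs n)"
      using ex_has_least_nat[of "\<lambda>_. True" 0 "\<lambda>n. card (Vs n)"] by auto
    have all: "Vs n0 \<subseteq> Vs n" for n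
    proof (cases "n \<le> n0")
      case True then show ?thesis by (rule anti)
    next
      case False
      hence sub: "Vs n \<subseteq> Vs n0" by (intro anti) simp
      have "card (Vs n0) \<le> card (Vs n)" using n0 by auto
      moreover have "card (Vs n) \<le> card (Vs n0)" using sub by (intro card_mono) auto
      ultimately have "card (Vs n) = card (Vs n0)" by simp
      hence "Vs n = Vs n0" using sub by (intro card_subset_eq) auto
      thus ?thesis by simp
    qed
    obtain h where h: "h \<in> Vs n0" using True by auto
    have hH: "h \<in> H" using h unfolding Vs_def version_space_def by auto
    have cons: "\<forall>(x,y)\<in>T n. y = h x" for n using all[of n] h unfolding Vs_def version_space_def by auto
    have eq: "run B h n = T n" for n using run_agree[OF cons[of n, unfolded T_def]] unfolding T_def by simp
    define N where "N = (LEAST n. B (run B h n) = None)"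
    have fin: "final_set B h = T N" unfolding final_set_def N_def[symmetric] by (rule eq)
    have "f (T N) \<le> f (S \<union> T N)" using f_mono unfolding monotone_setfun_def by auto
    hence "f (S \<union> T N) \<ge> Q" using Bf[OF hH] fin by simp
    moreover have "set_cost cost (T N) \<le> \<kappa> * C"
      using BC[OF hH] fin mult_right_mono[OF k1 C0] by simp
    ultimately show ?thesis by blast
  next
    case False
    then obtain n where "Vs n = {}" by auto
    define n1 where "n1 = (LEAST n. Vs n = {})"
    have n1e: "Vs n1 = {}" unfolding n1_def using \<open>Vs n = {}\<close> by (rule LeastI)
    have "Vs 0 = V" unfolding Vs_def T_def V_def by simp
    hence "n1 \<noteq> 0" using n1e V0 by auto
    then obtain m where m: "n1 = Suc m" by (cases n1) auto
    have "Vs m \<noteq> {}" using not_less_Least[of m "\<lambda>n. Vs n = {}"] unfolding n1_def[symmetric] m by auto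
    then obtain h where h: "h \<in> Vs m" by auto
    have hH: "h \<in> H" using h unfolding Vs_def version_space_def by auto
    have consm: "\<forall>(x,y)\<in>T m. y = h x" using h unfolding Vs_def version_space_def by auto
    have eqm: "run B h m = T m" using run_agree[OF consm[unfolded T_def]] unfolding T_def by simp
    obtain x where Bx: "B (T m) = Some x"
    proof (cases "B (T m)")
      case None
      hence "T (Suc m) = T m" unfolding T_def by simp
      hence "Vs n1 = Vs m" unfolding Vs_def m by simp
      then show ?thesis using n1e h by auto
    qed
    have Tsuc: "T (Suc m) = insert (x, h' x) (T m)" using Bx unfolding T_def by simp
    have hsuc: "run B h (Suc m) = insert (x, h x) (T m)" using Bx eqm by simp
    have hneq: "h x \<noteq> h' x"
    proof
      assume "h x = h' x"
      hence "h \<in> Vs (Suc m)" using h unfolding Vs_def version_space_def Tsuc by auto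
      thus False using n1e m by simp
    qed
    have gr: "\<And>a b. (a, b) \<in> T m \<Longrightarrow> b = h' a" unfolding T_def by (rule run_graph)
    have nin1: "(x, h' x) \<notin> T m" using consm hneq by auto
    have nin2: "(x, h x) \<notin> T m" using gr hneq by auto
    have fQ: "f (S \<union> T (Suc m)) \<ge> Q" using f_ca n1e m unfolding consistency_aware_def Vs_def by auto
    have cT: "set_cost cost (T (Suc m)) = set_cost cost (T m) + cost x (h' x)"
      unfolding Tsuc by (simp add: set_cost_insert[OF nin1])
    have ch: "set_cost cost (T m) + cost x (h x) \<le> C"
      using T_cost_final[OF hH, of "Suc m"] unfolding hsuc by (simp add: set_cost_insert[OF nin2])
    have cTm: "set_cost cost (T m) \<ge> 0" by (rule set_cost_nonneg[of cost, OF cost_pos])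
    have Rb: "set_cost cost (T (Suc m)) \<le> R_cost cost * C"
    proof -
      have "cost x (h' x) \<le> R_cost cost * cost x (h x)" by (rule R_ge[of cost, OF cost_pos])
      moreover have "set_cost cost (T m) \<le> R_cost cost * set_cost cost (T m)" using mult_right_mono[OF R1 cTm] by simp
      ultimately have "set_cost cost (T (Suc m)) \<le> R_cost cost * (set_cost cost (T m) + cost x (h x))"
        unfolding cT by (simp add: distrib_left)
      also have "\<dots> \<le> R_cost cost * C" using ch R1 by (intro mult_left_mono) auto
      finally show ?thesis .
    qed
    have gb: "set_cost cost (T (Suc m)) \<le> 2 * g_cost cost * C"
    proof (cases "C \<ge> phimin cost")
      case True
      have "cost x (h' x) \<le> cmax cost" by (rule cmax_ge)
      also have "\<dots> \<le> g_cost cost * C" unfolding cm using True g1 by (intro mult_left_mono) auto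
      finally have "set_cost cost (T (Suc m)) \<le> C + g_cost cost * C"
        unfolding cT using ch cost_pos[of x "h x"] by linarith
      also have "\<dots> \<le> 2 * g_cost cost * C" using mult_right_mono[OF g1 C0] by (simp add: mult.commute)
      finally show ?thesis .
    next
      case False
      have chp: "\<And>h1 n z. h1 \<in> H \<Longrightarrow> B (run B h1 n) = Some z \<Longrightarrow> cost z (h1 z) < phimin cost"
      proof -
        fix h1 n z assume h1: "h1 \<in> H" and "B (run B h1 n) = Some z"
        hence "(z, h1 z) \<in> run B h1 (Suc n)" by simp
        hence "cost z (h1 z) \<le> set_cost cost (run B h1 (Suc n))"
          unfolding set_cost_def using cost_pos
          by (intro member_le_sum[of "(z, h1 z)" _ "\<lambda>(a,b). cost a b", simplified]) (auto intro: less_imp_le)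
        also have "\<dots> \<le> C" by (rule T_cost_final[OF h1])
        finally show "cost z (h1 z) < phimin cost" using False by simp
      qed
      have ph: "\<And>z y1 y2. y1 \<noteq> y2 \<Longrightarrow> phimin cost \<le> max (cost z y1) (cost z y2)"
        using phimin_le phi_le order_trans by metis
      have hxH: "hx x \<in> H" using hx[of x] VH by auto
      have "run B (hx x) (Suc m) = run B h (Suc m)"
        by (rule runs_equal_cheap[OF chp[OF hxH] chp[OF hH] ph])
      hence "(x, h x) \<in> run B (hx x) (Suc m)" unfolding hsuc by simp
      hence "h x = hx x x" by (rule run_graph)
      thus ?thesis using hneq unfolding h'_def by simp
    qed
    have "set_cost cost (T (Suc m)) \<le> \<kappa> * C"
    proof -
      have "R_cost cost * C \<le> 2 * R_cost cost * C" using R1 C0 by (simp add: mult_right_mono)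
      hence a: "set_cost cost (T (Suc m)) \<le> 2 * R_cost cost * C" using Rb by linarith
      show ?thesis unfolding \<kappa>_def
        by (cases "g_cost cost \<le> R_cost cost") (use a gb in \<open>auto simp: min_def\<close>)
    qed
    thus ?thesis using fQ by blast
  qed
  then obtain N where N1: "f (S \<union> T N) \<ge> Q" and N2: "set_cost cost (T N) \<le> \<kappa> * C" by blast
  have "Q - f S = fq (S \<union> T N) - fq S" unfolding fq_def using N1 S by simp
  also have "\<dots> \<le> (\<Sum>e\<in>T N. delta fq e S)" by (rule subadd[OF fq_mono fq_sub]) simp
  also have "\<dots> = (\<Sum>(a,b)\<in>T N. u a * cost a b)"
  proof (rule sum.cong[OF refl])
    fix e assume e: "e \<in> T N"
    obtain a b where ab: "e = (a,b)" by (cases e)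
    have b: "b = h' a" using e ab unfolding T_def by (metis run_graph)
    have "delta fq e S = w (hx a) a * cost a b"
      unfolding w_def ab b h'_def using cost_pos[of a "hx a a"] by simp
    thus "delta fq e S = (case e of (a, b) \<Rightarrow> u a * cost a b)" using hx[of a] ab by simp
  qed
  also have "\<dots> \<le> (\<Sum>(a,b)\<in>T N. M * cost a b)"
    by (intro sum_mono) (simp add: case_prod_beta mult_right_mono[OF u_le less_imp_le[OF cost_pos]])
  also have "\<dots> = M * set_cost cost (T N)" unfolding set_cost_def
    by (simp add: sum_distrib_left case_prod_beta)
  also have "\<dots> \<le> M * (\<kappa> * C)" using N2 M_nn by (rule mult_left_mono)
  finally show ?thesis unfolding M_def u_def \<kappa>_def .
qed




lemma utility_nn:
  fixes H :: "('x::finite \<Rightarrow> 'y::finite) set"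
  assumes cost_pos: "\<And>x y. cost x y > 0" and f_mono: "monotone_setfun f"
    and hV: "h \<in> version_space H S"
  shows "utility H cost f Q x S \<ge> 0 \<and>
         utility H cost f Q x S * cost x (h x) \<le> delta (\<lambda>T. min (f T) Q) (x, h x) S"
proof -
  define fq where "fq = (\<lambda>T. min (f T) Q)"
  have fq_mono: "monotone_setfun fq" unfolding fq_def by (rule fQ_mono[OF f_mono])
  define w where "w h x = delta fq (x, h x) S / cost x (h x)" for h x
  have w_nn: "w h x \<ge> 0" for h x
  proof -
    have "fq S \<le> fq (S \<union> {(x, h x)})" using fq_mono unfolding monotone_setfun_def by (meson Un_upper1)
    thus ?thesis unfolding w_def delta_def using cost_pos[of x "h x"] by simp
  qed
  have ueq: "utility H cost f Q x S = Min ((\<lambda>h. w h x) ` version_space H S)"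
    unfolding utility_def w_def fq_def by simp
  have "utility H cost f Q x S \<le> w h x" unfolding ueq using hV by simp
  hence "utility H cost f Q x S * cost x (h x) \<le> delta fq (x, h x) S"
    unfolding w_def using cost_pos[of x "h x"] by (simp add: le_divide_eq)
  moreover have "utility H cost f Q x S \<ge> 0" unfolding ueq using hV by (subst Min_ge_iff) (auto simp: w_nn)
  ultimately show ?thesis unfolding fq_def by simp
qed

lemma greedy_bound:
  fixes H :: "('x::finite \<Rightarrow> 'y::finite) set"
    and cost :: "'x \<Rightarrow> 'y \<Rightarrow> real"
    and f :: "('x \<times> 'y) set \<Rightarrow> real"
    and Q \<eta> \<alpha> K :: real
    and A :: "('x,'y) ialg"
  assumes cost_pos: "\<And>x y. cost x y > 0"
    and Q_pos: "Q > 0" and eta_pos: "\<eta> > 0"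
    and f_mono: "monotone_setfun f"
    and f_empty: "f {} = 0"
    and f_gap: "\<And>S. f S \<ge> Q - \<eta> \<Longrightarrow> f S \<ge> Q"
    and alpha_ge: "\<alpha> \<ge> 1"
    and greedy: "approx_greedy \<alpha> (utility H cost f Q) f Q A"
    and keyh: "\<And>S. f S < Q \<Longrightarrow> Q - f S \<le> Max (range (\<lambda>x. utility H cost f Q x S)) * K"
    and Kpos: "K > 0"
    and hH: "hh \<in> H"
  shows "terminates A hh \<and> set_cost cost (final_set A hh) \<le> \<alpha> * K * (ln (Q / \<eta>) + 1)"
proof -
  define Sq where "Sq n = run A hh n" for n
  define D where "D = \<alpha> * K"
  have Dpos: "D > 0" unfolding D_def using alpha_ge Kpos by simp
  define G where "G n = Q - f (Sq n)" for n
  define c where "c n = (case A (Sq n) of Some x \<Rightarrow> cost x (hh x) | None \<Rightarrow> 0)" for n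
  have gNone: "f S \<ge> Q \<Longrightarrow> A S = None" for S using greedy unfolding approx_greedy_def by blast
  have lessQ: "A (Sq n) \<noteq> None \<Longrightarrow> f (Sq n) < Q" for n using gNone by (meson not_le)
  have step: "\<exists>x. A (Sq n) = Some x \<and> (x, hh x) \<notin> Sq n \<and> Sq (Suc n) = insert (x, hh x) (Sq n)
      \<and> c n = cost x (hh x) \<and> c n * G n \<le> D * (min (f (Sq (Suc n))) Q - f (Sq n))"
    if fl: "f (Sq n) < Q" for n
  proof -
    obtain x where Ax: "A (Sq n) = Some x"
      and ux: "utility H cost f Q x (Sq n) \<ge> (1/\<alpha>) * Max (range (\<lambda>x'. utility H cost f Q x' (Sq n)))"
      using greedy fl unfolding approx_greedy_def by (meson not_le)
    have hV: "hh \<in> version_space H (Sq n)" unfolding version_space_def Sq_def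
      using hH run_graph by fastforce
    note un = utility_nn[where cost=cost and Q=Q and x=x, OF cost_pos f_mono hV]
    define u where "u = utility H cost f Q x (Sq n)"
    define M where "M = Max (range (\<lambda>x'. utility H cost f Q x' (Sq n)))"
    have Ssuc: "Sq (Suc n) = insert (x, hh x) (Sq n)" unfolding Sq_def using Ax by (simp add: Sq_def)
    have Mle: "M \<le> \<alpha> * u" using ux alpha_ge unfolding M_def u_def by (simp add: field_simps)
    have G1: "G n \<le> M * K" using keyh[OF fl] unfolding G_def M_def .
    also have "\<dots> \<le> \<alpha> * u * K" using Mle Kpos by (simp add: mult_right_mono)
    finally have G2: "G n \<le> D * u" unfolding D_def by (simp add: algebra_simps)
    define del where "del = min (f (Sq (Suc n))) Q - f (Sq n)"
    have del_eq: "del = delta (\<lambda>T. min (f T) Q) (x, hh x) (Sq n)"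
      unfolding del_def delta_def Ssuc using fl by simp
    have ud: "u * cost x (hh x) \<le> del" using un unfolding del_eq u_def by simp
    have "cost x (hh x) * G n \<le> cost x (hh x) * (D * u)"
      using G2 cost_pos[of x "hh x"] by (simp add: mult_left_mono)
    also have "\<dots> = D * (u * cost x (hh x))" by simp
    also have "\<dots> \<le> D * del" using ud Dpos by (simp add: mult_left_mono)
    finally have cG: "cost x (hh x) * G n \<le> D * del" .
    have "G n > 0" unfolding G_def using fl by simp
    hence "cost x (hh x) * G n > 0" using cost_pos[of x "hh x"] by simp
    hence "D * del > 0" using cG by linarith
    hence "del > 0" using Dpos by (simp add: zero_less_mult_iff)
    hence nin: "(x, hh x) \<notin> Sq n" unfolding del_def Ssuc using fl by (auto simp: insert_absorb)
    show ?thesis using Ax nin Ssuc cG unfolding c_def del_def by simp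
  qed
  have cardS: "(\<forall>j<n. A (Sq j) \<noteq> None) \<Longrightarrow> card (Sq n) = n" for n
  proof (induction n)
    case 0 then show ?case by (simp add: Sq_def)
  next
    case (Suc n)
    hence "f (Sq n) < Q" using lessQ by simp
    then obtain x where "(x, hh x) \<notin> Sq n" "Sq (Suc n) = insert (x, hh x) (Sq n)" using step by blast
    then show ?case using Suc by simp
  qed
  have trm: "terminates A hh"
  proof (rule ccontr)
    assume "\<not> terminates A hh"
    hence "\<forall>j. A (Sq j) \<noteq> None" unfolding terminates_def Sq_def by simp
    hence "card (Sq (Suc (card (UNIV :: ('x \<times> 'y) set)))) = Suc (card (UNIV :: ('x \<times> 'y) set))"
      using cardS by blast
    moreover have "card (Sq (Suc (card (UNIV :: ('x \<times> 'y) set)))) \<le> card (UNIV :: ('x \<times> 'y) set)"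
      by (rule card_mono) auto
    ultimately show False by simp
  qed
  have costS: "set_cost cost (Sq n) = (\<Sum>j<n. c j)" for n
  proof (induction n)
    case 0 then show ?case by (simp add: Sq_def set_cost_def)
  next
    case (Suc n)
    show ?case
    proof (cases "A (Sq n)")
      case None
      hence "Sq (Suc n) = Sq n" "c n = 0" unfolding Sq_def c_def by auto
      then show ?thesis using Suc by simp
    next
      case (Some x)
      hence "f (Sq n) < Q" using lessQ by simp
      then obtain x where "(x, hh x) \<notin> Sq n" "Sq (Suc n) = insert (x, hh x) (Sq n)" "c n = cost x (hh x)"
        using step by blast
      then show ?thesis using Suc by (simp add: set_cost_insert)
    qed
  qed
  define N where "N = (LEAST n. A (Sq n) = None)"
  have fin: "final_set A hh = Sq N" unfolding final_set_def N_def Sq_def ..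
  have before: "j < N \<Longrightarrow> A (Sq j) \<noteq> None" for j using not_less_Least[of j "\<lambda>n. A (Sq n) = None"]
    unfolding N_def by blast
  have Gj: "j < N \<Longrightarrow> G j > \<eta> \<and> f (Sq j) < Q" for j
  proof -
    assume "j < N"
    hence fl: "f (Sq j) < Q" using before lessQ by blast
    hence "\<not> f (Sq j) \<ge> Q - \<eta>" using f_gap by force
    thus ?thesis using fl unfolding G_def by simp
  qed
  have rec: "G (Suc j) \<le> G j * (1 - c j / D) \<and> c j \<le> D" if "j < N" for j
  proof -
    have fl: "f (Sq j) < Q" using Gj[OF that] by simp
    obtain x where cG: "c j * G j \<le> D * (min (f (Sq (Suc j))) Q - f (Sq j))" using step[OF fl] by blast
    have a: "min (f (Sq (Suc j))) Q - f (Sq j) \<le> G j - G (Suc j)" unfolding G_def by simp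
    have b: "min (f (Sq (Suc j))) Q - f (Sq j) \<le> G j" unfolding G_def by simp
    have "c j * G j \<le> D * (G j - G (Suc j))" using cG a Dpos by (meson mult_left_mono less_imp_le order_trans)
    hence r1: "G (Suc j) \<le> G j * (1 - c j / D)" using Dpos by (simp add: field_simps)
    have "c j * G j \<le> D * G j" using cG b Dpos by (meson mult_left_mono less_imp_le order_trans)
    hence "c j \<le> D" using Gj[OF that] eta_pos by simp
    thus ?thesis using r1 by simp
  qed
  have lnb: "n < N \<Longrightarrow> ln (G n) \<le> ln Q - (\<Sum>j<n. c j) / D" for n
  proof (induction n)
    case 0 then show ?case by (simp add: G_def Sq_def f_empty)
  next
    case (Suc n)
    hence nN: "n < N" by simp
    have g1: "G (Suc n) > 0" "G n > 0" using Gj[OF Suc.prems] Gj[OF nN] eta_pos by auto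
    have r: "G (Suc n) \<le> G n * (1 - c n / D)" using rec[OF nN] by simp
    define t where "t = 1 - c n / D"
    have tpos: "t > 0"
    proof (rule ccontr)
      assume "\<not> t > 0"
      hence "G n * t \<le> 0" using g1 by (simp add: mult_nonneg_nonpos)
      thus False using r g1 unfolding t_def by simp
    qed
    have "ln (G (Suc n)) \<le> ln (G n * t)" using r g1 tpos unfolding t_def by simp
    also have "\<dots> = ln (G n) + ln t" using g1 tpos by (simp add: ln_mult)
    also have "\<dots> \<le> ln (G n) + (t - 1)" using ln_le_minus_one[OF tpos] by simp
    also have "\<dots> \<le> ln Q - (\<Sum>j<n. c j) / D - c n / D" using Suc.IH[OF nN] unfolding t_def by simp
    finally show ?case by (simp add: add_divide_distrib)
  qed
  have "A (Sq 0) \<noteq> None" using gNone greedy f_empty Q_pos unfolding approx_greedy_def Sq_def by auto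
  moreover have "A (Sq N) = None" using trm unfolding N_def terminates_def Sq_def by (rule LeastI_ex)
  ultimately have "N \<noteq> 0" by (metis (no_types))
  then obtain M where NM: "N = Suc M" by (cases N) auto
  have "ln \<eta> < ln (G M)" using Gj[of M] NM eta_pos by simp
  also have "\<dots> \<le> ln Q - (\<Sum>j<M. c j) / D" using lnb[of M] NM by simp
  finally have "(\<Sum>j<M. c j) / D < ln Q - ln \<eta>" by simp
  also have "ln Q - ln \<eta> = ln (Q / \<eta>)" using Q_pos eta_pos by (simp add: ln_div)
  finally have s1: "(\<Sum>j<M. c j) \<le> D * ln (Q / \<eta>)" using Dpos by (simp add: field_simps)
  have s2: "c M \<le> D" using rec[of M] NM by simp
  have "set_cost cost (final_set A hh) = (\<Sum>j<M. c j) + c M" unfolding fin costS NM by simp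
  also have "\<dots> \<le> D * (ln (Q / \<eta>) + 1)" using s1 s2 by (simp add: distrib_left)
  finally show ?thesis using trm unfolding D_def by simp
qed




theorem theorem3:
  fixes H :: "('x::finite \<Rightarrow> 'y::finite) set"
    and cost :: "'x \<Rightarrow> 'y \<Rightarrow> real"
    and f :: "('x \<times> 'y) set \<Rightarrow> real"
    and Q \<eta> \<alpha> :: real
    and A :: "('x,'y) ialg"
  assumes card_Y: "card (UNIV :: 'y set) \<ge> 2"
    and cost_pos: "\<And>x y. cost x y > 0"
    and f_nonneg: "\<And>S. f S \<ge> 0"
    and Q_pos: "Q > 0" and eta_pos: "\<eta> > 0"
    and f_mono: "monotone_setfun f"
    and f_submod: "submodular f"
    and f_empty: "f {} = 0"
    and f_gap: "\<And>S. f S \<ge> Q - \<eta> \<Longrightarrow> f S \<ge> Q"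
    and f_ca: "consistency_aware H f Q"
    and alpha_ge: "\<alpha> \<ge> 1"
    and greedy: "approx_greedy \<alpha> (utility H cost f Q) f Q A"
  shows "alg_cost H cost A
           \<le> ereal (2 * min (g_cost cost) (R_cost cost) * \<alpha> * (ln (Q / \<eta>) + 1)) * OPT H cost f Q"
proof -
  define \<kappa> where "\<kappa> = 2 * min (g_cost cost) (R_cost cost)"
  define K0 where "K0 = 2 * min (g_cost cost) (R_cost cost) * \<alpha> * (ln (Q / \<eta>) + 1)"
  have VH0: "version_space H {} = H" unfolding version_space_def by simp
  have Hne: "H \<noteq> {}"
  proof
    assume "H = {}"
    hence "f {} \<ge> Q" using f_ca VH0 unfolding consistency_aware_def by metis
    thus False using f_empty Q_pos by simp
  qed
  have etaQ: "\<eta> < Q"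
  proof (rule ccontr)
    assume "\<not> \<eta> < Q"
    hence "f {} \<ge> Q - \<eta>" using f_empty by simp
    hence "f {} \<ge> Q" by (rule f_gap)
    thus False using f_empty Q_pos by simp
  qed
  have R1: "R_cost cost \<ge> 1" by (rule R_ge1[of cost, OF cost_pos])
  have g1: "g_cost cost \<ge> 1" using g_eq[of cost, OF cost_pos card_Y] by auto
  have lnpos: "ln (Q / \<eta>) > 0" using etaQ eta_pos by simp
  have K0pos: "K0 > 0" unfolding K0_def using R1 g1 alpha_ge lnpos
    by (intro mult_pos_pos) auto
  define F where "F = {B. \<forall>h\<in>H. terminates B h \<and> f (final_set B h) \<ge> Q}"
  have main: "alg_cost H cost A \<le> ereal K0 * alg_cost H cost B" if BF: "B \<in> F" for B
  proof -
    have Bt: "\<And>h. h \<in> H \<Longrightarrow> terminates B h" and Bf: "\<And>h. h \<in> H \<Longrightarrow> f (final_set B h) \<ge> Q"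
      using BF unfolding F_def by auto
    define C where "C = Max ((\<lambda>h. set_cost cost (final_set B h)) ` H)"
    have BC: "\<And>h. h \<in> H \<Longrightarrow> set_cost cost (final_set B h) \<le> C" unfolding C_def by simp
    have "C \<in> (\<lambda>h. set_cost cost (final_set B h)) ` H" unfolding C_def using Hne by (intro Max_in) auto
    then obtain h0 where h0: "h0 \<in> H" "C = set_cost cost (final_set B h0)" by auto
    have CB: "ereal C \<le> alg_cost H cost B" unfolding alg_cost_def
      by (rule SUP_upper2[OF h0(1)]) (simp add: h0(2) Bt[OF h0(1)])
    have keyh: "\<And>S. f S < Q \<Longrightarrow> Q - f S \<le> Max (range (\<lambda>x. utility H cost f Q x S)) * (\<kappa> * C)"
      unfolding \<kappa>_def by (rule key[OF card_Y cost_pos f_mono f_submod f_ca Bt Bf BC])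
    have Kpos: "\<kappa> * C > 0"
    proof -
      have k0: "Q \<le> Max (range (\<lambda>x. utility H cost f Q x {})) * (\<kappa> * C)"
        using keyh[of "{}"] f_empty Q_pos by simp
      have "h0 \<in> version_space H {}" using VH0 h0 by simp
      hence "utility H cost f Q undefined {} \<ge> 0"
        using utility_nn[where cost=cost and Q=Q and x=undefined, OF cost_pos f_mono] by blast
      hence M0: "Max (range (\<lambda>x. utility H cost f Q x {})) \<ge> 0"
      proof -
        have "utility H cost f Q undefined {} \<le> Max (range (\<lambda>x. utility H cost f Q x {}))" by simp
        thus ?thesis using \<open>utility H cost f Q undefined {} \<ge> 0\<close> by linarith
      qed
      show ?thesis
      proof (rule ccontr)
        assume "\<not> \<kappa> * C > 0"
        hence "Max (range (\<lambda>x. utility H cost f Q x {})) * (\<kappa> * C) \<le> 0"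
          using M0 by (simp add: mult_nonneg_nonpos)
        thus False using k0 Q_pos by simp
      qed
    qed
    have gb: "\<And>h. h \<in> H \<Longrightarrow> terminates A h \<and> set_cost cost (final_set A h) \<le> \<alpha> * (\<kappa> * C) * (ln (Q / \<eta>) + 1)"
      by (rule greedy_bound[OF cost_pos Q_pos eta_pos f_mono f_empty f_gap alpha_ge greedy keyh Kpos])
    have eqK: "\<alpha> * (\<kappa> * C) * (ln (Q / \<eta>) + 1) = K0 * C" unfolding K0_def \<kappa>_def by simp
    have "alg_cost H cost A \<le> ereal (K0 * C)" unfolding alg_cost_def
      by (rule SUP_least) (use gb eqK in auto)
    also have "\<dots> = ereal K0 * ereal C" by simp
    also have "\<dots> \<le> ereal K0 * alg_cost H cost B" using CB K0pos by (intro ereal_mult_left_mono) auto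
    finally show ?thesis .
  qed
  have inv: "ereal (1/K0) * (ereal K0 * x) = x" for x :: ereal
  proof -
    have "ereal (1/K0) * (ereal K0 * x) = (ereal (1/K0) * ereal K0) * x" by (rule mult.assoc[symmetric])
    also have "ereal (1/K0) * ereal K0 = 1" using K0pos by (simp add: one_ereal_def)
    finally show ?thesis by simp
  qed
  have "ereal (1/K0) * alg_cost H cost A \<le> OPT H cost f Q" unfolding OPT_def
  proof (rule INF_greatest)
    fix B assume "B \<in> {A. \<forall>h\<in>H. terminates A h \<and> Q \<le> f (final_set A h)}"
    hence "B \<in> F" unfolding F_def .
    hence "ereal (1/K0) * alg_cost H cost A \<le> ereal (1/K0) * (ereal K0 * alg_cost H cost B)"
      using main K0pos by (intro ereal_mult_left_mono) auto
    thus "ereal (1/K0) * alg_cost H cost A \<le> alg_cost H cost B" unfolding inv .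
  qed
  hence "ereal K0 * (ereal (1/K0) * alg_cost H cost A) \<le> ereal K0 * OPT H cost f Q"
    using K0pos by (intro ereal_mult_left_mono) auto
  moreover have "ereal K0 * (ereal (1/K0) * alg_cost H cost A) = alg_cost H cost A"
  proof -
    have "ereal K0 * (ereal (1/K0) * alg_cost H cost A) = (ereal K0 * ereal (1/K0)) * alg_cost H cost A"
      by (rule mult.assoc[symmetric])
    also have "ereal K0 * ereal (1/K0) = 1" using K0pos by (simp add: one_ereal_def)
    finally show ?thesis by simp
  qed
  ultimately show ?thesis unfolding K0_def by simp
qed


end
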